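(* Let $\tilde w:\mathcal D^n(\delta)\to\mathcal D^n(\delta)$ and let $C\subset\mathcal D^n(\delta)$ be nonempty and bounded with $\tilde w(C)\subset C$. Then the minimal absorbing set $\mathcal M[\tilde w,C]$ exists, i.e. the intersection of all absorbing sets for $\tilde w$ in $C$ is itself an absorbing set for $\tilde w$ in $C$.
   Context: $\mathcal D^n(\delta)=\{\delta m:m\in\mathbb Z^n\}\subset\mathbb R^n$ for fixed $\delta>0$. For a map $\tilde w$ and nonempty $C$ with $\tilde w(C)\subset C$, a set $\Lambda\subset C$ is an absorbing set for $\tilde w$ in $C$ if for every $\tilde x\in C$ there is $N\in\mathbb N$ with $\tilde w^{\circ i}(\tilde x)\in\Lambda$ for all $i\ge N$ (absorbing sets are nonempty). When the intersection of all absorbing sets in $C$ is absorbing in $C$, it is called the minimal absorbing set $\mathcal M[\tilde w,C]$. *)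

theory Defs
  imports "HOL-Analysis.Analysis"
begin

text \<open>The lattice D^n(delta) = {delta m : m in Z^n} inside R^n.\<close>
definition grid :: "real \<Rightarrow> (real ^ 'n) set" where
  "grid \<delta> = {x. \<exists>m :: int ^ 'n. x = (\<chi> i. \<delta> * of_int (m $ i))}"

definition absorbing_set :: "('a \<Rightarrow> 'a) \<Rightarrow> 'a set \<Rightarrow> 'a set \<Rightarrow> bool" where
  "absorbing_set w C \<Lambda> \<longleftrightarrow> \<Lambda> \<noteq> {} \<and> \<Lambda> \<subseteq> C \<and>
     (\<forall>x\<in>C. \<exists>N::nat. \<forall>i\<ge>N. (w ^^ i) x \<in> \<Lambda>)"

end

theory Submission
  imports Defs
begin

lemma grid_bounded_finite:
  fixes C :: "(real ^ 'n) set"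
  assumes "\<delta> > 0" "C \<subseteq> grid \<delta>" "bounded C"
  shows "finite C"
proof -
  obtain B where B: "\<And>x. x \<in> C \<Longrightarrow> norm x \<le> B"
    using assms(3) bounded_iff by blast
  define K where "K = ceiling (B / \<delta>)"
  define f where "f = (\<lambda>m :: int ^ 'n. (\<chi> i. \<delta> * of_int (m $ i)) :: real ^ 'n)"
  define S where "S = vec_lambda ` (PiE UNIV (\<lambda>_::'n. {-K..K}))"
  have fS: "finite S" unfolding S_def by (intro finite_imageI finite_PiE) auto
  have "C \<subseteq> f ` S"
  proof
    fix x assume x: "x \<in> C"
    then obtain m :: "int ^ 'n" where m: "x = f m"
      using assms(2) unfolding grid_def f_def by blast
    have "m $ i \<in> {-K..K}" for i
    proof -
      have "\<bar>x $ i\<bar> \<le> B" using B[OF x] component_le_norm_cart[of x i] by linarith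
      moreover have "x $ i = \<delta> * of_int (m $ i)" using m f_def by simp
      ultimately have "\<delta> * \<bar>of_int (m $ i)\<bar> \<le> B" using assms(1) by (simp add: abs_mult)
      hence "\<bar>of_int (m $ i)\<bar> \<le> B / \<delta>" using assms(1) by (simp add: field_simps)
      hence "\<bar>real_of_int (m $ i)\<bar> \<le> real_of_int K" unfolding K_def
        using le_of_int_ceiling order_trans by blast
      hence "\<bar>m $ i\<bar> \<le> K" by linarith
      thus ?thesis by (simp add: abs_le_iff)
    qed
    hence "m \<in> S" unfolding S_def
      by (intro image_eqI[of _ _ "\<lambda>i. m $ i"]) auto
    thus "x \<in> f ` S" using m by blast
  qed
  thus ?thesis using fS finite_subset by blast
qed

theorem theorem3:
  fixes w :: "real ^ 'n \<Rightarrow> real ^ 'n" and C :: "(real ^ 'n) set" and \<delta> :: real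
  assumes "\<delta> > 0"
    and "w ` grid \<delta> \<subseteq> grid \<delta>"
    and "C \<subseteq> grid \<delta>" and "C \<noteq> {}" and "bounded C"
    and "w ` C \<subseteq> C"
  shows "absorbing_set w C (\<Inter> {\<Lambda>. absorbing_set w C \<Lambda>})"
proof -
  have fC: "finite C" using grid_bounded_finite assms(1,3,5) by blast
  let ?F = "{\<Lambda>. absorbing_set w C \<Lambda>}"
  have fF: "finite ?F"
    by (rule finite_subset[of _ "Pow C"]) (use fC in \<open>auto simp: absorbing_set_def\<close>)
  have itC: "(w ^^ i) x \<in> C" if "x \<in> C" for i x
    using that assms(6) by (induction i) auto
  have CF: "C \<in> ?F" using assms(4) itC by (auto simp: absorbing_set_def)
  have key: "\<forall>x\<in>C. \<exists>N. \<forall>i\<ge>N. \<forall>\<Lambda>\<in>G. (w ^^ i) x \<in> \<Lambda>" if "finite G" "G \<subseteq> ?F" for G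
    using that
  proof (induction G rule: finite_induct)
    case empty then show ?case by auto
  next
    case (insert L G)
    show ?case
    proof
      fix x assume x: "x \<in> C"
      obtain N1 where N1: "\<forall>i\<ge>N1. \<forall>\<Lambda>\<in>G. (w ^^ i) x \<in> \<Lambda>" using insert x by auto
      obtain N2 where N2: "\<forall>i\<ge>N2. (w ^^ i) x \<in> L"
        using insert(4) x unfolding absorbing_set_def by blast
      show "\<exists>N. \<forall>i\<ge>N. \<forall>\<Lambda>\<in>insert L G. (w ^^ i) x \<in> \<Lambda>"
        by (rule exI[of _ "max N1 N2"]) (use N1 N2 in auto)
    qed
  qed
  have K: "\<forall>x\<in>C. \<exists>N. \<forall>i\<ge>N. (w ^^ i) x \<in> \<Inter> ?F"
    using key[OF fF subset_refl] by blast
  obtain x where x: "x \<in> C" using assms(4) by blast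
  then obtain N where "\<forall>i\<ge>N. (w ^^ i) x \<in> \<Inter> ?F" using K by blast
  hence ne: "\<Inter> ?F \<noteq> {}" by blast
  have sub: "\<Inter> ?F \<subseteq> C" using CF by blast
  show ?thesis by (subst absorbing_set_def) (use ne sub K in blast)
qed

end
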